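(* Let $n$ be an even integer and let $x$ be an integer with $6 \leq x \leq n-4$. Let $d$ be the sequence of length $n$ $$d = (n-1,\, n-1,\, n-1,\, \underbrace{x, \ldots, x}_{n-6},\, 3,\, 3,\, 3).$$ Then $d$ is a $3$-factorable graphic sequence, and no realization of $d$ has a connected $3$-factor.
   Context: A finite sequence of nonnegative integers $d = (d_1, \ldots, d_n)$ is graphic if there is a simple graph on vertices $v_1, \ldots, v_n$ with $\deg(v_i) = d_i$ for all $i$; such a graph is a realization of $d$. A $k$-factor of a graph $G$ is a spanning subgraph of $G$ in which every vertex has degree $k$. A graphic sequence $d$ is $k$-factorable if some realization of $d$ contains a $k$-factor. A connected $k$-factor is a $k$-factor that is a connected graph. *)

theory Defs
  imports Main
begin

text \<open>Simple graphs on the vertex set {0..<n}, with v_{i+1} represented by i.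
  A graph is given by its edge set: a set of 2-element subsets of {0..<n}.\<close>

definition simple_graph :: "nat \<Rightarrow> nat set set \<Rightarrow> bool" where
  "simple_graph n E \<longleftrightarrow> (\<forall>e\<in>E. \<exists>u v. u \<noteq> v \<and> u < n \<and> v < n \<and> e = {u, v})"

definition deg :: "nat set set \<Rightarrow> nat \<Rightarrow> nat" where
  "deg E v = card {e\<in>E. v \<in> e}"

definition realization :: "nat list \<Rightarrow> nat set set \<Rightarrow> bool" where
  "realization d E \<longleftrightarrow> simple_graph (length d) E \<and> (\<forall>i < length d. deg E i = d ! i)"

definition graphic :: "nat list \<Rightarrow> bool" where
  "graphic d \<longleftrightarrow> (\<exists>E. realization d E)"

definition k_factor :: "nat \<Rightarrow> nat \<Rightarrow> nat set set \<Rightarrow> nat set set \<Rightarrow> bool" where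
  "k_factor k n E F \<longleftrightarrow> F \<subseteq> E \<and> (\<forall>v < n. deg F v = k)"

definition k_factorable :: "nat \<Rightarrow> nat list \<Rightarrow> bool" where
  "k_factorable k d \<longleftrightarrow> graphic d \<and> (\<exists>E F. realization d E \<and> k_factor k (length d) E F)"

definition connected_graph :: "nat \<Rightarrow> nat set set \<Rightarrow> bool" where
  "connected_graph n F \<longleftrightarrow>
     (\<forall>u < n. \<forall>v < n. (u, v) \<in> {(a, b). {a, b} \<in> F}\<^sup>*)"

definition connected_k_factor :: "nat \<Rightarrow> nat \<Rightarrow> nat set set \<Rightarrow> nat set set \<Rightarrow> bool" where
  "connected_k_factor k n E F \<longleftrightarrow> k_factor k n E F \<and> connected_graph n F"

end

theory Submission
  imports Defs
begin


lemma sg_finite: "simple_graph n E \<Longrightarrow> finite E"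
proof -
  assume "simple_graph n E"
  hence "E \<subseteq> Pow {..<n}" unfolding simple_graph_def by fastforce
  thus ?thesis by (meson finite_Pow_iff finite_lessThan finite_subset)
qed

lemma full_vertex:
  assumes sg: "simple_graph n E" and dv: "deg E v = n - 1" and v: "v < n"
    and u: "u < n" "u \<noteq> v"
  shows "{v,u} \<in> E"
proof -
  let ?S = "{e\<in>E. v\<in>e}"
  let ?T = "(\<lambda>u. {v,u}) ` ({..<n} - {v})"
  have sub: "?S \<subseteq> ?T"
  proof
    fix e assume e: "e \<in> ?S"
    then obtain a b where ab: "a \<noteq> b" "a < n" "b < n" "e = {a,b}"
      using sg unfolding simple_graph_def by blast
    show "e \<in> ?T"
    proof (cases "v = a")
      case True thus ?thesis using ab by auto
    next
      case False hence "v = b" using e ab by auto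
      thus ?thesis using ab by (auto simp: insert_commute)
    qed
  qed
  have "inj_on (\<lambda>u. {v,u}) ({..<n} - {v})" by (auto simp: inj_on_def doubleton_eq_iff)
  hence "card ?T = n - 1" using v by (simp add: card_image)
  moreover have "finite ?T" by simp
  ultimately have "?S = ?T" using card_subset_eq[of ?T ?S] dv sub unfolding deg_def by simp
  thus ?thesis using u by auto
qed

lemma no_conn:
  assumes len: "length d = n" and n: "7 \<le> n"
    and hub: "\<And>i. i < 3 \<Longrightarrow> d ! i = n - 1"
    and low: "\<And>i. n - 3 \<le> i \<Longrightarrow> i < n \<Longrightarrow> d ! i = 3"
    and R: "realization d E"
  shows "\<not> connected_k_factor 3 n E F"
proof
  assume cf: "connected_k_factor 3 n E F"
  have sg: "simple_graph n E" and dE: "\<And>i. i < n \<Longrightarrow> deg E i = d ! i"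
    using R len unfolding realization_def by auto
  have FE: "F \<subseteq> E" and dF: "\<And>v. v < n \<Longrightarrow> deg F v = 3"
    and conn: "connected_graph n F"
    using cf unfolding connected_k_factor_def k_factor_def by auto
  have finE: "finite E" using sg_finite sg by blast
  hence finF: "finite F" using FE finite_subset by blast
  have A: "{a, w} \<in> E" if "a < 3" "w < n" "w \<noteq> a" for a w
    using full_vertex[OF sg _ _ that(2,3)] hub dE that n by auto
  have FW: "{e\<in>F. w\<in>e} = {{w,0},{w,1},{w,2}}" if w: "n - 3 \<le> w" "w < n" for w
  proof -
    have "{0,w} \<in> E" "{1,w} \<in> E" "{2,w} \<in> E" using A[of 0 w] A[of 1 w] A[of 2 w] w n by auto
    hence "{w,0} \<in> E" "{w,1} \<in> E" "{w,2} \<in> E" by (simp_all add: insert_commute)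
    hence s1: "{{w,0},{w,1},{w,2}} \<subseteq> {e\<in>E. w\<in>e}" by blast
    have "{w,0} \<noteq> {w,1}" "{w,0} \<noteq> {w,2}" "{w,1} \<noteq> {w,2}" using w n by (simp_all add: doubleton_eq_iff)
    hence c3: "card {{w,0},{w,1},{w,2}} = (3::nat)" by simp
    have "card {e\<in>E. w\<in>e} = 3" using dE[of w] low[of w] w unfolding deg_def by simp
    hence eqE: "{e\<in>E. w\<in>e} = {{w,0},{w,1},{w,2}}"
      using card_subset_eq[of "{e\<in>E. w\<in>e}" "{{w,0},{w,1},{w,2}}"] s1 c3 finE by simp
    have "{e\<in>F. w\<in>e} \<subseteq> {e\<in>E. w\<in>e}" using FE by auto
    moreover have "card {e\<in>F. w\<in>e} = 3" using dF[of w] w unfolding deg_def by simp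
    ultimately show ?thesis
      using card_subset_eq[of "{e\<in>E. w\<in>e}" "{e\<in>F. w\<in>e}"] finE eqE c3 by simp
  qed
  have FA: "{e\<in>F. a\<in>e} = {{a,n-3},{a,n-2},{a,n-1}}" if a: "a < 3" for a
  proof -
    have a3: "a = 0 \<or> a = 1 \<or> a = 2" using a by auto
    have "{w,a} \<in> F" if w: "n - 3 \<le> w" "w < n" for w
    proof -
      have "{w,a} \<in> {{w,0},{w,1},{w,2}}" using a3 by blast
      hence "{w,a} \<in> {e\<in>F. w\<in>e}" using FW[OF w] by simp
      thus ?thesis by simp
    qed
    hence "{n-3,a} \<in> F" "{n-2,a} \<in> F" "{n-1,a} \<in> F" using n by auto
    hence "{a,n-3} \<in> F" "{a,n-2} \<in> F" "{a,n-1} \<in> F" by (simp_all add: insert_commute)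
    hence s1: "{{a,n-3},{a,n-2},{a,n-1}} \<subseteq> {e\<in>F. a\<in>e}" by blast
    have "{a,n-3} \<noteq> {a,n-2}" using a n by (auto simp: doubleton_eq_iff)
    moreover have "{a,n-3} \<noteq> {a,n-1}" using a n by (auto simp: doubleton_eq_iff)
    moreover have "{a,n-2} \<noteq> {a,n-1}" using a n by (auto simp: doubleton_eq_iff)
    ultimately
    have c3: "card {{a,n-3},{a,n-2},{a,n-1}} = (3::nat)" by simp
    have "card {e\<in>F. a\<in>e} = 3" using dF[of a] a n unfolding deg_def by simp
    thus ?thesis
      using card_subset_eq[of "{e\<in>F. a\<in>e}" "{{a,n-3},{a,n-2},{a,n-1}}"] s1 c3 finF by simp
  qed
  let ?S = "{0,1,2,n-3,n-2,n-1::nat}"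
  have reach: "z \<in> ?S" if "(0, z) \<in> {(a, b). {a, b} \<in> F}\<^sup>*" for z
    using that
  proof (induction rule: rtrancl_induct)
    case base thus ?case by simp
  next
    case (step y z)
    hence yz: "{y,z} \<in> {e\<in>F. y\<in>e}" by simp
    show ?case
    proof (cases "y < 3")
      case True
      hence "{y,z} \<in> {{y,n-3},{y,n-2},{y,n-1}}" using FA[OF True] yz by simp
      thus ?thesis by (auto simp: doubleton_eq_iff)
    next
      case False
      hence "n - 3 \<le> y" "y < n" using step.IH n by auto
      hence "{y,z} \<in> {{y,0},{y,1},{y,2}}" using FW yz by simp
      thus ?thesis by (auto simp: doubleton_eq_iff)
    qed
  qed
  have "(0, 3) \<in> {(a, b). {a, b} \<in> F}\<^sup>*" using conn n unfolding connected_graph_def by auto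
  from reach[OF this] show False using n by auto
qed



definition edges_of :: "(nat \<Rightarrow> nat \<Rightarrow> bool) \<Rightarrow> nat set set" where
  "edges_of R = {{a,b} | a b. R a b}"

lemma deg_edges_of:
  assumes sym: "\<And>a b. R a b \<Longrightarrow> R b a" and irr: "\<And>a. \<not> R a a"
  shows "deg (edges_of R) v = card {u. R v u}"
proof -
  have "{e \<in> edges_of R. v \<in> e} = (\<lambda>u. {v,u}) ` {u. R v u}"
  proof
    show "{e \<in> edges_of R. v \<in> e} \<subseteq> (\<lambda>u. {v,u}) ` {u. R v u}"
    proof
      fix e assume "e \<in> {e \<in> edges_of R. v \<in> e}"
      then obtain a b where ab: "R a b" "e = {a,b}" "v \<in> e" unfolding edges_of_def by blast
      show "e \<in> (\<lambda>u. {v,u}) ` {u. R v u}"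
      proof (cases "v = a")
        case True thus ?thesis using ab by auto
      next
        case False hence "v = b" using ab by auto
        thus ?thesis using ab sym[OF ab(1)] by (auto simp: insert_commute)
      qed
    qed
    show "(\<lambda>u. {v,u}) ` {u. R v u} \<subseteq> {e \<in> edges_of R. v \<in> e}"
      unfolding edges_of_def by blast
  qed
  moreover have "inj_on (\<lambda>u. {v,u}) {u. R v u}" by (auto simp: inj_on_def doubleton_eq_iff)
  ultimately show ?thesis unfolding deg_def by (simp add: card_image)
qed

lemma edges_of_mono: "(\<And>a b. R a b \<Longrightarrow> S a b) \<Longrightarrow> edges_of R \<subseteq> edges_of S"
  unfolding edges_of_def by blast

definition circ :: "nat \<Rightarrow> nat set \<Rightarrow> nat \<Rightarrow> nat \<Rightarrow> bool" where
  "circ m D i j \<longleftrightarrow> i < m \<and> j < m \<and> i \<noteq> j \<and> (if i \<le> j then j - i else j + m - i) \<in> D"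

lemma circ_sym:
  assumes D: "\<And>\<delta>. \<delta> \<in> D \<Longrightarrow> m - \<delta> \<in> D" and c: "circ m D i j"
  shows "circ m D j i"
proof (cases "i \<le> j")
  case True
  hence "j - i \<in> D" using c unfolding circ_def by auto
  hence "m - (j - i) \<in> D" by (rule D)
  moreover have "m - (j - i) = i + m - j" using True c unfolding circ_def by auto
  ultimately show ?thesis using c True unfolding circ_def by auto
next
  case False
  hence "j + m - i \<in> D" using c unfolding circ_def by auto
  hence "m - (j + m - i) \<in> D" by (rule D)
  moreover have "m - (j + m - i) = i - j" using False c unfolding circ_def by auto
  ultimately show ?thesis using c False unfolding circ_def by auto
qed

lemma circ_mono: "circ m D i j \<Longrightarrow> D \<subseteq> D' \<Longrightarrow> circ m D' i j"
  unfolding circ_def by auto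

lemma circ_card:
  assumes D: "D \<subseteq> {1..<m}" and i: "i < m"
  shows "card {j. circ m D i j} = card D"
proof -
  let ?f = "\<lambda>\<delta>. if i + \<delta> < m then i + \<delta> else i + \<delta> - m"
  have "{j. circ m D i j} = ?f ` D"
  proof
    show "{j. circ m D i j} \<subseteq> ?f ` D"
    proof
      fix j assume "j \<in> {j. circ m D i j}"
      hence c: "circ m D i j" by simp
      show "j \<in> ?f ` D"
      proof (cases "i \<le> j")
        case True
        have m: "j - i \<in> D" using True c unfolding circ_def by auto
        have e: "j = ?f (j - i)" using True c unfolding circ_def by auto
        show ?thesis using image_eqI[where f="?f", OF e m] .
      next
        case False
        have m: "j + m - i \<in> D" using False c unfolding circ_def by auto
        have e: "j = ?f (j + m - i)" using False c unfolding circ_def by auto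
        show ?thesis using image_eqI[where f="?f", OF e m] .
      qed
    qed
    show "?f ` D \<subseteq> {j. circ m D i j}"
    proof
      fix j assume "j \<in> ?f ` D"
      then obtain \<delta> where d: "\<delta> \<in> D" "j = ?f \<delta>" by blast
      have d1: "1 \<le> \<delta>" "\<delta> < m" using d D by auto
      show "j \<in> {j. circ m D i j}"
      proof (cases "i + \<delta> < m")
        case True
        hence "j = i + \<delta>" using d by simp
        thus ?thesis using True d d1 i unfolding circ_def by auto
      next
        case False
        hence "j = i + \<delta> - m" using d by simp
        moreover have "j + m - i = \<delta>" using False calculation d1 i by auto
        ultimately show ?thesis using False d d1 i unfolding circ_def by auto
      qed
    qed
  qed
  moreover have "inj_on ?f D"
  proof
    fix a b assume "a \<in> D" "b \<in> D" "?f a = ?f b"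
    thus "a = b" using D i by (auto split: if_splits)
  qed
  ultimately show ?thesis using card_image[of ?f D] by (simp only:)
qed



lemma circ_props:
  assumes D: "D \<subseteq> {1..<m}" and sym: "\<And>\<delta>. \<delta> \<in> D \<Longrightarrow> m - \<delta> \<in> D"
  shows "\<forall>i j. circ m D i j \<longrightarrow> circ m D j i \<and> i < m \<and> j < m \<and> i \<noteq> j"
    and "\<forall>i<m. card {j. circ m D i j} = card D"
  using circ_sym[OF sym] circ_card[OF D] unfolding circ_def by blast+

definition Dset :: "nat \<Rightarrow> nat \<Rightarrow> nat set" where
  "Dset m k = {1..k div 2} \<union> {m - k div 2..<m} \<union> (if odd k then {m div 2} else {})"

lemma Dset_props:
  assumes "even m" "k < m"
  shows "Dset m k \<subseteq> {1..<m}" "\<And>\<delta>. \<delta> \<in> Dset m k \<Longrightarrow> m - \<delta> \<in> Dset m k"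
    "card (Dset m k) = k"
proof -
  let ?h = "k div 2"
  have h: "2 * ?h < m" "0 < m" using assms by auto
  have m2: "2 \<le> m" using h(2) assms(1) by presburger
  show "Dset m k \<subseteq> {1..<m}" using h m2 unfolding Dset_def by auto
  show "m - \<delta> \<in> Dset m k" if "\<delta> \<in> Dset m k" for \<delta>
    using that h assms(1) unfolding Dset_def by (auto split: if_splits)
  have c1: "card ({1..?h} \<union> {m - ?h..<m}) = 2 * ?h"
    using h by (subst card_Un_disjoint) auto
  show "card (Dset m k) = k"
  proof (cases "odd k")
    case True
    have "m div 2 \<notin> {1..?h} \<union> {m - ?h..<m}" using h True assms by auto
    hence "card (Dset m k) = Suc (2 * ?h)" using True c1 unfolding Dset_def by simp
    thus ?thesis using True by presburger
  next
    case False
    thus ?thesis using c1 unfolding Dset_def by simp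
  qed
qed

definition matchr :: "nat \<Rightarrow> nat \<Rightarrow> nat \<Rightarrow> bool" where
  "matchr m i j \<longleftrightarrow> i < m \<and> j < m \<and> i \<noteq> j \<and> i div 2 = j div 2"

lemma pm1: "(j::nat) div 2 = i div 2 \<Longrightarrow> j \<noteq> i \<Longrightarrow> even i \<Longrightarrow> j = i + 1" by presburger
lemma pm2: "(j::nat) div 2 = i div 2 \<Longrightarrow> j \<noteq> i \<Longrightarrow> odd i \<Longrightarrow> j = i - 1" by presburger
lemma pm3: "even (m::nat) \<Longrightarrow> i < m \<Longrightarrow> even i \<Longrightarrow> i + 1 < m" by presburger
lemma pm4: "(j::nat) div 2 = i div 2 \<Longrightarrow> j \<noteq> i \<Longrightarrow> j = i + 1 \<or> i = j + 1" by presburger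
lemma pm5: "odd (i::nat) \<Longrightarrow> (i - 1) div 2 = i div 2" by presburger
lemma pm6: "even (i::nat) \<Longrightarrow> (i + 1) div 2 = i div 2" by presburger
lemma pm7: "odd (i::nat) \<Longrightarrow> i - 1 \<noteq> i" by presburger

lemma matchr_nb:
  assumes "even m" "i < m"
  shows "{j. matchr m i j} = {if even i then i + 1 else i - 1}"
proof (cases "even i")
  case True
  have "matchr m i j \<longleftrightarrow> j = i + 1" for j
    using assms True pm1[of j i] pm3[of m i] pm6[of i] unfolding matchr_def by auto
  thus ?thesis using True by auto
next
  case False
  have "matchr m i j \<longleftrightarrow> j = i - 1" for j
    using assms False pm2[of j i] pm5[of i] pm7[of i] unfolding matchr_def by auto
  thus ?thesis using False by auto
qed

lemma q1: "even (m::nat) \<Longrightarrow> m - m div 2 = m div 2" by presburger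
lemma q2: "even (m::nat) \<Longrightarrow> 4 \<le> m \<Longrightarrow> 1 < m div 2" by presburger
lemma q3: "even (m::nat) \<Longrightarrow> 4 \<le> m \<Longrightarrow> m div 2 < m - 1" by presburger
lemma q4: "even (m::nat) \<Longrightarrow> 3 \<le> k \<Longrightarrow> k < m \<Longrightarrow> \<not> odd k \<Longrightarrow> 6 \<le> m" by presburger
lemma q5: "3 \<le> (k::nat) \<Longrightarrow> \<not> odd k \<Longrightarrow> 2 \<le> k div 2" by presburger

lemma mid_exists:
  assumes m: "even m" "4 \<le> m" and k: "3 \<le> k" "k < m"
  shows "\<exists>G Fm. (\<forall>i j. G i j \<longrightarrow> G j i \<and> i < m \<and> j < m \<and> i \<noteq> j)
     \<and> (\<forall>i<m. card {j. G i j} = k) \<and> (\<forall>i j. Fm i j \<longrightarrow> G i j)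
     \<and> (\<forall>i j. Fm i j \<longrightarrow> Fm j i) \<and> (\<forall>i<m. card {j. Fm i j} = 3)"
proof -
  note DP = Dset_props[OF m(1) k(2)]
  note GP = circ_props[OF DP(1,2)]
  let ?G = "circ m (Dset m k)"
  have Gc: "\<forall>i<m. card {j. ?G i j} = k" using GP(2) DP(3) by simp
  have h3: "1 \<le> k div 2" using k by auto
  show ?thesis
  proof (cases "odd k")
    case True
    let ?D3 = "{1, m - 1, m div 2}"
    have h2: "m - m div 2 = m div 2" "1 < m div 2" "m div 2 < m - 1" using q1 q2 q3 m by auto
    have D3: "?D3 \<subseteq> {1..<m}" using h2 by auto
    have D3s: "\<And>\<delta>. \<delta> \<in> ?D3 \<Longrightarrow> m - \<delta> \<in> ?D3" using h2 by auto
    have c3: "card ?D3 = 3" using h2 by auto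
    have sub: "?D3 \<subseteq> Dset m k" using h2 h3 True unfolding Dset_def by auto
    note FP = circ_props[OF D3 D3s]
    have f3: "\<forall>i j. circ m ?D3 i j \<longrightarrow> ?G i j" using circ_mono[OF _ sub] by blast
    have f5: "\<forall>i<m. card {j. circ m ?D3 i j} = 3" using FP(2) c3 by simp
    have f4: "\<forall>i j. circ m ?D3 i j \<longrightarrow> circ m ?D3 j i" using FP(1) by blast
    have f1: "\<forall>i j. ?G i j \<longrightarrow> ?G j i \<and> i < m \<and> j < m \<and> i \<noteq> j" using GP(1) by blast
    show ?thesis
      apply (rule exI[of _ ?G], rule exI[of _ "circ m ?D3"])
      using f1 Gc f3 f4 f5 by (intro conjI)
  next
    case False
    let ?D2 = "{2, m - 2}"
    have m6: "6 \<le> m" "2 \<le> k div 2" using m k False q4 q5 by auto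
    have D2: "?D2 \<subseteq> {1..<m}" using m6 by auto
    have D2s: "\<And>\<delta>. \<delta> \<in> ?D2 \<Longrightarrow> m - \<delta> \<in> ?D2" using m6 by auto
    have c2: "card ?D2 = 2" using m6 by auto
    have sub: "?D2 \<subseteq> Dset m k" using m6 False unfolding Dset_def by auto
    have sub1: "{1, m - 1} \<subseteq> Dset m k" using m6 h3 unfolding Dset_def by auto
    note FP = circ_props[OF D2 D2s]
    let ?F = "\<lambda>i j. circ m ?D2 i j \<or> matchr m i j"
    have mG: "matchr m i j \<Longrightarrow> ?G i j" for i j
    proof -
      assume a: "matchr m i j"
      have ij: "i < m" "j < m" "i \<noteq> j" using a unfolding matchr_def by auto
      have s1: "1 \<in> Dset m k" "m - 1 \<in> Dset m k" using sub1 by auto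
      have "j = i + 1 \<or> i = j + 1" using a pm4[of j i] unfolding matchr_def by auto
      thus ?thesis
      proof
        assume "j = i + 1" thus ?thesis using ij s1 unfolding circ_def by simp
      next
        assume e: "i = j + 1"
        hence "j + m - i = m - 1" by simp
        thus ?thesis using ij s1 e unfolding circ_def by simp
      qed
    qed
    have Fsym: "?F i j \<Longrightarrow> ?F j i" for i j
    proof -
      assume "?F i j"
      thus "?F j i"
      proof
        assume "circ m ?D2 i j" thus ?thesis using FP(1) by blast
      next
        assume "matchr m i j" thus ?thesis unfolding matchr_def by simp
      qed
    qed
    have Fcard: "card {j. ?F i j} = 3" if i: "i < m" for i
    proof -
      have "{j. ?F i j} = {j. circ m ?D2 i j} \<union> {j. matchr m i j}" by auto
      moreover have "{j. circ m ?D2 i j} \<inter> {j. matchr m i j} = {}"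
      proof -
        have "\<not> (circ m ?D2 i j \<and> matchr m i j)" for j
        proof
          assume a: "circ m ?D2 i j \<and> matchr m i j"
          hence "j = i + 1 \<or> i = j + 1" using pm4[of j i] unfolding matchr_def by auto
          thus False using a m6 unfolding circ_def matchr_def by auto
        qed
        thus ?thesis by auto
      qed
      moreover have "finite {j. circ m ?D2 i j}" unfolding circ_def by auto
      moreover have "card {j. circ m ?D2 i j} = 2" using FP(2) c2 i by auto
      moreover have "card {j. matchr m i j} = 1" using matchr_nb[OF m(1) i] by simp
      moreover have "finite {j. matchr m i j}" using matchr_nb[OF m(1) i] by simp
      ultimately show ?thesis by (simp add: card_Un_disjoint)
    qed
    have f3: "\<forall>i j. ?F i j \<longrightarrow> ?G i j" using circ_mono[OF _ sub] mG by blast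
    have f4: "\<forall>i j. ?F i j \<longrightarrow> ?F j i" using Fsym by blast
    have f5: "\<forall>i<m. card {j. ?F i j} = 3" using Fcard by blast
    have f1: "\<forall>i j. ?G i j \<longrightarrow> ?G j i \<and> i < m \<and> j < m \<and> i \<noteq> j" using GP(1) by blast
    show ?thesis
      apply (rule exI[of _ ?G], rule exI[of _ ?F])
      using f1 Gc f3 f4 f5 by (intro conjI)
  qed
qed



lemma construct:
  assumes n: "10 \<le> n" "even n" and x: "6 \<le> x" "x + 4 \<le> n" and len: "length d = n"
    and dn: "\<And>i. i < n \<Longrightarrow> d ! i = (if i < 3 then n - 1 else if i < n - 3 then x else 3)"
  shows "\<exists>E F. realization d E \<and> k_factor 3 n E F"
proof -
  have p: "even (n - 6)" "4 \<le> n - 6" "3 \<le> x - 3" "x - 3 < n - 6" using n x by auto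
  obtain G Fm where g1: "\<forall>i j. G i j \<longrightarrow> G j i \<and> i < n - 6 \<and> j < n - 6 \<and> i \<noteq> j"
    and g2: "\<forall>i<n - 6. card {j. G i j} = x - 3" and g3: "\<forall>i j. Fm i j \<longrightarrow> G i j"
    and g4: "\<forall>i j. Fm i j \<longrightarrow> Fm j i" and g5: "\<forall>i<n - 6. card {j. Fm i j} = 3"
    using mid_exists[OF p] by blast
  define RE where "RE a b \<longleftrightarrow> a \<noteq> b \<and> a < n \<and> b < n \<and> (a < 3 \<or> b < 3 \<or> (3 \<le> a \<and> 3 \<le> b \<and> G (a - 3) (b - 3)))" for a b
  define RF where "RF a b \<longleftrightarrow> (a < 3 \<and> n - 3 \<le> b \<and> b < n) \<or> (b < 3 \<and> n - 3 \<le> a \<and> a < n) \<or> (3 \<le> a \<and> 3 \<le> b \<and> Fm (a - 3) (b - 3))" for a b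
  have REs: "RE b a" if "RE a b" for a b using that g1 unfolding RE_def by auto
  have REi: "\<not> RE a a" for a unfolding RE_def by auto
  have RFs: "RF b a" if "RF a b" for a b using that g4 unfolding RF_def by auto
  have RFi: "\<not> RF a a" for a
  proof
    assume "RF a a"
    thus False unfolding RF_def using g1 g3 n by auto
  qed
  have FE: "RE a b" if rab: "RF a b" for a b
  proof -
    consider "a < 3 \<and> n - 3 \<le> b \<and> b < n" | "b < 3 \<and> n - 3 \<le> a \<and> a < n" | "3 \<le> a \<and> 3 \<le> b \<and> Fm (a - 3) (b - 3)"
      using rab unfolding RF_def by blast
    thus ?thesis
    proof cases
      case 3
      hence "G (a - 3) (b - 3)" using g3 by blast
      hence "a - 3 < n - 6" "b - 3 < n - 6" "a - 3 \<noteq> b - 3" using g1 by blast+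
      thus ?thesis using 3 \<open>G (a - 3) (b - 3)\<close> unfolding RE_def by auto
    qed (use n in \<open>auto simp: RE_def\<close>)
  qed
  have GB: "i < n - 6" if "G i j" for i j using that g1 by blast
  have nbE: "card {u. RE v u} = d ! v" if v: "v < n" for v
  proof -
    consider "v < 3" | "3 \<le> v" "v < n - 3" | "n - 3 \<le> v" using v by linarith
    thus ?thesis
    proof cases
      case 1
      have "{u. RE v u} = {..<n} - {v}" using 1 v unfolding RE_def by auto
      thus ?thesis using 1 v dn[OF v] by simp
    next
      case 2
      have e: "{u. RE v u} = {..<3} \<union> (\<lambda>j. j + 3) ` {j. G (v - 3) j}"
      proof
        show "{u. RE v u} \<subseteq> {..<3} \<union> (\<lambda>j. j + 3) ` {j. G (v - 3) j}"
        proof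
          fix u assume "u \<in> {u. RE v u}"
          hence u: "RE v u" by simp
          show "u \<in> {..<3} \<union> (\<lambda>j. j + 3) ` {j. G (v - 3) j}"
          proof (cases "u < 3")
            case True thus ?thesis by simp
          next
            case False
            hence "G (v - 3) (u - 3)" "u = (u - 3) + 3" using u 2 unfolding RE_def by auto
            thus ?thesis by blast
          qed
        qed
        show "{..<3} \<union> (\<lambda>j. j + 3) ` {j. G (v - 3) j} \<subseteq> {u. RE v u}"
        proof
          fix u assume "u \<in> {..<3} \<union> (\<lambda>j. j + 3) ` {j. G (v - 3) j}"
          hence "u < 3 \<or> (\<exists>j. G (v - 3) j \<and> u = j + 3)" by blast
          thus "u \<in> {u. RE v u}"
          proof
            assume "u < 3" thus ?thesis using 2 unfolding RE_def by auto
          next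
            assume "\<exists>j. G (v - 3) j \<and> u = j + 3"
            then obtain j where j: "G (v - 3) j" "u = j + 3" by blast
            have "j < n - 6" "v - 3 \<noteq> j" using g1 j(1) by blast+
            hence "v \<noteq> u" "u < n" "v < n" using j(2) 2 by auto
            moreover have "G (v - 3) (u - 3)" using j by simp
            ultimately show ?thesis using 2 j(2) unfolding RE_def by simp
          qed
        qed
      qed
      have "{j. G (v - 3) j} \<subseteq> {..<n-6}" using g1 by blast
      hence "finite {j. G (v - 3) j}" using finite_subset by blast
      hence "card ({..<3} \<union> (\<lambda>j. j + 3) ` {j. G (v - 3) j}) = 3 + card {j. G (v - 3) j}"
        by (subst card_Un_disjoint) (auto simp: card_image)
      moreover have "card {j. G (v - 3) j} = x - 3" using g2 2 by auto
      ultimately show ?thesis using e dn[OF v] 2 x by simp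
    next
      case 3
      have "{u. RE v u} = {..<3}" using 3 v GB n unfolding RE_def by fastforce
      thus ?thesis using 3 v dn[OF v] n by simp
    qed
  qed
  have nbF: "card {u. RF v u} = 3" if v: "v < n" for v
  proof -
    consider "v < 3" | "3 \<le> v" "v < n - 3" | "n - 3 \<le> v" using v by linarith
    thus ?thesis
    proof cases
      case 1
      have "{u. RF v u} = {n - 3..<n}" using 1 v n unfolding RF_def by auto
      thus ?thesis using n by simp
    next
      case 2
      have e: "{u. RF v u} = (\<lambda>j. j + 3) ` {j. Fm (v - 3) j}"
      proof
        show "{u. RF v u} \<subseteq> (\<lambda>j. j + 3) ` {j. Fm (v - 3) j}"
        proof
          fix u assume "u \<in> {u. RF v u}"
          hence "Fm (v - 3) (u - 3)" "u = (u - 3) + 3" using 2 n unfolding RF_def by auto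
          thus "u \<in> (\<lambda>j. j + 3) ` {j. Fm (v - 3) j}" by blast
        qed
        show "(\<lambda>j. j + 3) ` {j. Fm (v - 3) j} \<subseteq> {u. RF v u}"
          using 2 unfolding RF_def by auto
      qed
      have "card ((\<lambda>j. j + 3) ` {j. Fm (v - 3) j}) = card {j. Fm (v - 3) j}"
        by (simp add: card_image)
      thus ?thesis using e g5 2 by auto
    next
      case 3
      have "{u. RF v u} = {..<3}"
      proof -
        have "\<not> Fm (v - 3) j" for j using g3 GB 3 n by fastforce
        thus ?thesis using 3 v n unfolding RF_def by auto
      qed
      thus ?thesis by simp
    qed
  qed
  have sg: "simple_graph n (edges_of RE)"
    unfolding simple_graph_def
  proof
    fix e assume "e \<in> edges_of RE"
    then obtain a b where ab: "RE a b" "e = {a,b}" unfolding edges_of_def by blast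
    hence "a \<noteq> b" "a < n" "b < n" unfolding RE_def by auto
    thus "\<exists>u v. u \<noteq> v \<and> u < n \<and> v < n \<and> e = {u, v}" using ab(2) by blast
  qed
  have dE: "deg (edges_of RE) i = d ! i" if "i < length d" for i
    using deg_edges_of[of RE, OF REs REi] nbE[of i] that len by simp
  have R: "realization d (edges_of RE)"
    unfolding realization_def using sg len dE by simp
  have dF: "deg (edges_of RF) v = 3" if "v < n" for v
    using deg_edges_of[of RF, OF RFs RFi] nbF[of v] that by simp
  have sub: "edges_of RF \<subseteq> edges_of RE" by (rule edges_of_mono) (rule FE)
  have K: "k_factor 3 n (edges_of RE) (edges_of RF)"
    unfolding k_factor_def using sub dF by blast
  show ?thesis using R K by blast
qed


theorem claim1:
  fixes n x :: nat
  assumes "even n" and "6 \<le> x" and "x + 4 \<le> n"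
  defines "d \<equiv> replicate 3 (n - 1) @ replicate (n - 6) x @ replicate 3 3"
  shows "graphic d \<and> k_factorable 3 d \<and>
         (\<forall>E. realization d E \<longrightarrow> \<not> (\<exists>F. connected_k_factor 3 n E F))"
proof -
  have n10: "10 \<le> n" using assms(2,3) by simp
  have len: "length d = n" unfolding d_def using n10 by simp
  have dn: "d ! i = (if i < 3 then n - 1 else if i < n - 3 then x else 3)" if "i < n" for i
    unfolding d_def using n10 that by (auto simp: nth_append)
  obtain E F where R: "realization d E" and KF: "k_factor 3 n E F"
    using construct[OF n10 assms(1,2,3) len dn] by blast
  have g: "graphic d" using R unfolding graphic_def by blast
  have kf: "k_factorable 3 d" unfolding k_factorable_def using g R KF len by blast
  have hub: "d ! i = n - 1" if "i < 3" for i using dn[of i] that n10 by simp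
  have low: "d ! i = 3" if "n - 3 \<le> i" "i < n" for i using dn[of i] that n10 by simp
  have nc: "\<forall>E. realization d E \<longrightarrow> \<not> (\<exists>F. connected_k_factor 3 n E F)"
  proof (intro allI impI)
    fix E assume "realization d E"
    thus "\<not> (\<exists>F. connected_k_factor 3 n E F)"
      using no_conn[OF len _ hub low] n10 by auto
  qed
  show ?thesis using g kf nc by blast
qed

end
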